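(* Under the standing setup, assume that $f$ is bounded, i.e. $\sup_{q\in\mathcal P}\|f_q\|_\infty<\infty$ (which implies $\sup_{q\in\mathcal P}\|q\|<\infty$). Let $\Sigma=(\Sigma(t))_{t\ge0}$ be the Nisio semigroup of $(\mathcal P,0)$, i.e. the Nisio semigroup constructed with $f_q$ replaced by $0$ for all $q\in\mathcal P$. Then $s\mapsto\Sigma(s)v$ is continuous for every $v\in\mathbb R^d$, and for all $u_0\in\mathbb R^d$ and $t\ge0$, $\mathscr S(t)u_0-u_0\le\int_0^t\Sigma(s)\mathcal Qu_0\,ds$ (componentwise).
   Context: Standing setup: $d\in\mathbb N$; vectors in $\mathbb R^d$ with $\|u\|_\infty=\max_i|u_i|$; $\|a\|$ is the operator norm of $a\in\mathbb R^{d\times d}$ w.r.t. $\|\cdot\|_\infty$; inequalities, integrals and suprema of vectors are componentwise; reals are identified with constant vectors. A $Q$-matrix is $q\in\mathbb R^{d\times d}$ with $q_{ii}\le0$, $q_{ij}\ge0$ ($i\ne j$), $\sum_jq_{ij}=0$. Let $\mathcal P$ be a set of $Q$-matrices and $f=(f_q)_{q\in\mathcal P}\subset\mathbb R^d$ with $\sup_{q\in\mathcal P}f_q=f_{q_0}=0$ for some $q_0\in\mathcal P$, such that $\mathcal Qu:=\sup_{q\in\mathcal P}(qu+f_q)$ is finite for every $u\in\mathbb R^d$. For $q\in\mathcal P$, $t\ge0$: $S_q(t)u_0:=e^{tq}u_0+\int_0^te^{sq}f_q\,ds$. For $h\ge0$: $\mathcal E_hu_0:=\sup_{q\in\mathcal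 P}S_q(h)u_0$. $P$ is the set of finite subsets $\pi\subset[0,\infty)$ with $0\in\pi$; $P_t:=\{\pi\in P:\max\pi=t\}$. For $\pi=\{t_0,\dots,t_m\}$ with $0=t_0<\dots<t_m$, $m\ge1$, $\mathcal E_\pi:=\mathcal E_{t_1-t_0}\circ\cdots\circ\mathcal E_{t_m-t_{m-1}}$, and $\mathcal E_{\{0\}}:=\mathcal E_0$. The Nisio semigroup of $(\mathcal P,f)$ is $\mathscr S(t)u_0:=\sup_{\pi\in P_t}\mathcal E_\pi u_0$. *)

theory Defs
  imports "HOL-Analysis.Analysis"
begin

text \<open>Vectors in R^d are real^'n (finite index type 'n, d = CARD('n));
 matrices are real^'n^'n; the order on vectors is componentwise (less_eq_vec).\<close>

definition is_Qmatrix :: "real^'n^'n \<Rightarrow> bool" where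
  "is_Qmatrix q \<longleftrightarrow> (\<forall>i. q$i$i \<le> 0) \<and> (\<forall>i j. i \<noteq> j \<longrightarrow> q$i$j \<ge> 0)
     \<and> (\<forall>i. (\<Sum>j\<in>UNIV. q$i$j) = 0)"

primrec matpow :: "real^'n^'n \<Rightarrow> nat \<Rightarrow> real^'n^'n" where
  "matpow q 0 = mat 1"
| "matpow q (Suc k) = q ** matpow q k"

definition mexp :: "real \<Rightarrow> real^'n^'n \<Rightarrow> real^'n^'n" where
  "mexp t q = (\<Sum>k. ((t ^ k) / fact k) *\<^sub>R matpow q k)"

definition vsup :: "'a set \<Rightarrow> ('a \<Rightarrow> real^'n) \<Rightarrow> real^'n" where
  "vsup A g = (\<chi> i. SUP a\<in>A. g a $ i)"

definition Sq :: "(real^'n^'n \<Rightarrow> real^'n) \<Rightarrow> real^'n^'n \<Rightarrow> real \<Rightarrow> real^'n \<Rightarrow> real^'n" where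
  "Sq f q t u0 = mexp t q *v u0 + integral {0..t} (\<lambda>s. mexp s q *v f q)"

definition Qop :: "(real^'n^'n) set \<Rightarrow> (real^'n^'n \<Rightarrow> real^'n) \<Rightarrow> real^'n \<Rightarrow> real^'n" where
  "Qop P f u = vsup P (\<lambda>q. q *v u + f q)"

definition Eh :: "(real^'n^'n) set \<Rightarrow> (real^'n^'n \<Rightarrow> real^'n) \<Rightarrow> real \<Rightarrow> real^'n \<Rightarrow> real^'n" where
  "Eh P f h u0 = vsup P (\<lambda>q. Sq f q h u0)"

fun Echain :: "(real \<Rightarrow> real^'n \<Rightarrow> real^'n) \<Rightarrow> real list \<Rightarrow> real^'n \<Rightarrow> real^'n" where
  "Echain E (a # b # r) u = E (b - a) (Echain E (b # r) u)"
| "Echain E _ u = u"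

definition Epi :: "(real^'n^'n) set \<Rightarrow> (real^'n^'n \<Rightarrow> real^'n) \<Rightarrow> real set \<Rightarrow> real^'n \<Rightarrow> real^'n" where
  "Epi P f \<pi> u0 = (if \<pi> = {0} then Eh P f 0 u0
                    else Echain (Eh P f) (sorted_list_of_set \<pi>) u0)"

definition partitions :: "real \<Rightarrow> real set set" where
  "partitions t = {\<pi>. finite \<pi> \<and> \<pi> \<subseteq> {0..} \<and> 0 \<in> \<pi> \<and> Max \<pi> = t}"

definition nisio :: "(real^'n^'n) set \<Rightarrow> (real^'n^'n \<Rightarrow> real^'n) \<Rightarrow> real \<Rightarrow> real^'n \<Rightarrow> real^'n" where
  "nisio P f t u0 = vsup (partitions t) (\<lambda>\<pi>. Epi P f \<pi> u0)"

end

theory Submission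
  imports Defs
begin

typedef (overloaded) 'a blop = "UNIV :: ('a::real_normed_vector \<Rightarrow>\<^sub>L 'a) set" morphisms brep babs by auto
setup_lifting type_definition_blop

instantiation blop :: (real_normed_vector) real_normed_vector
begin
lift_definition norm_blop :: "'a blop \<Rightarrow> real" is norm .
lift_definition minus_blop :: "'a blop \<Rightarrow> 'a blop \<Rightarrow> 'a blop" is "(-)" .
lift_definition plus_blop :: "'a blop \<Rightarrow> 'a blop \<Rightarrow> 'a blop" is "(+)" .
lift_definition uminus_blop :: "'a blop \<Rightarrow> 'a blop" is "uminus" .
lift_definition zero_blop :: "'a blop" is "0" .
lift_definition scaleR_blop :: "real \<Rightarrow> 'a blop \<Rightarrow> 'a blop" is "scaleR" .
definition dist_blop :: "'a blop \<Rightarrow> 'a blop \<Rightarrow> real"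
  where "dist_blop a b = norm (a - b)"
definition uniformity_blop :: "('a blop \<times> 'a blop) filter" where
  "uniformity_blop = (INF e\<in>{0 <..}. principal {(x, y). dist x y < e})"
definition open_blop :: "'a blop set \<Rightarrow> bool"
  where "open_blop S = (\<forall>x\<in>S. \<forall>\<^sub>F (x', y) in uniformity. x' = x \<longrightarrow> y \<in> S)"
definition sgn_blop :: "'a blop \<Rightarrow> 'a blop"
  where "sgn_blop x = scaleR (inverse (norm x)) x"
instance
  apply standard
  unfolding dist_blop_def open_blop_def sgn_blop_def uniformity_blop_def
  apply (rule refl | (transfer, force simp: algebra_simps norm_triangle_ineq))+
  done
end

instantiation blop :: ("{real_normed_vector,perfect_space}") real_normed_algebra_1
begin
lift_definition times_blop :: "'a blop \<Rightarrow> 'a blop \<Rightarrow> 'a blop" is "blinfun_compose" .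
lift_definition one_blop :: "'a blop" is "id_blinfun" .
instance
proof
  fix a b c :: "'a blop" and r :: real
  show "a * b * c = a * (b * c)" by transfer (auto intro: blinfun_eqI)
  show "1 * a = a" by transfer (auto intro: blinfun_eqI)
  show "a * 1 = a" by transfer (auto intro: blinfun_eqI)
  show "(a + b) * c = a * c + b * c" by transfer (auto intro: blinfun_eqI simp: blinfun.bilinear_simps)
  show "a * (b + c) = a * b + a * c" by transfer (auto intro: blinfun_eqI simp: blinfun.bilinear_simps)
  show "(0::'a blop) \<noteq> 1"
  proof
    assume "(0::'a blop) = 1"
    then have "norm (0::'a blop) = norm (1::'a blop)" by simp
    then show False by transfer simp
  qed
  show "r *\<^sub>R a * b = r *\<^sub>R (a * b)" by transfer (auto intro: blinfun_eqI simp: blinfun.bilinear_simps)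
  show "a * r *\<^sub>R b = r *\<^sub>R (a * b)" by transfer (auto intro: blinfun_eqI simp: blinfun.bilinear_simps)
  show "norm (1::'a blop) = 1" by transfer simp
  show "norm (a * b) \<le> norm a * norm b" by transfer (rule norm_blinfun_compose)
qed
end

lemma dist_brep: "dist a b = dist (brep a) (brep b)"
  unfolding dist_blop_def dist_norm by transfer simp

instance blop :: (banach) banach
proof
  fix X :: "nat \<Rightarrow> 'a blop"
  assume "Cauchy X"
  then have "Cauchy (\<lambda>n. brep (X n))" unfolding Cauchy_def dist_brep .
  then obtain L where "(\<lambda>n. brep (X n)) \<longlonglongrightarrow> L" using convergent_def Cauchy_convergent_iff by blast
  then have "X \<longlonglongrightarrow> babs L" unfolding LIMSEQ_def dist_brep by (simp add: babs_inverse)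
  then show "convergent X" unfolding convergent_def by blast
qed


definition bap :: "'a::real_normed_vector blop \<Rightarrow> 'a \<Rightarrow> 'a" where
  "bap B x = blinfun_apply (brep B) x"

definition Phi :: "real^'n^'n \<Rightarrow> (real^'n) blop" where
  "Phi q = babs (Blinfun (\<lambda>x. q *v x))"

lemma bap_Phi[simp]: "bap (Phi q) x = q *v x"
  unfolding bap_def Phi_def by (simp add: babs_inverse bounded_linear_Blinfun_apply)

lemma bap_mult[simp]: "bap (A * B) x = bap A (bap B x)"
  unfolding bap_def by (simp add: times_blop.rep_eq)

lemma bap_one[simp]: "bap 1 x = x"
  unfolding bap_def by (simp add: one_blop.rep_eq)

lemma bounded_linear_brep: "bounded_linear brep"
  by (rule bounded_linear_intro[where K=1]) (simp_all add: plus_blop.rep_eq scaleR_blop.rep_eq norm_blop.rep_eq)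

lemma bounded_linear_bap_left: "bounded_linear (\<lambda>B. bap B x)"
  unfolding bap_def
  using bounded_linear_compose[OF blinfun.bounded_linear_left bounded_linear_brep, of x] by (simp add: o_def)

lemma linear_bap_right: "linear (bap B)"
  unfolding bap_def by (rule bounded_linear.linear[OF blinfun.bounded_linear_right])

lemma bap_add_left: "bap (A + B) x = bap A x + bap B x"
  using real_vector.linear_add[OF bounded_linear.linear[OF bounded_linear_bap_left]] by blast
lemma bap_scaleR_left: "bap (r *\<^sub>R B) x = r *\<^sub>R bap B x"
  using real_vector.linear_scale[OF bounded_linear.linear[OF bounded_linear_bap_left]] by blast

lemma bl_vec:
  fixes g :: "'a::real_normed_vector \<Rightarrow> 'b::real_normed_vector^'n"
  assumes bl: "\<And>i. bounded_linear (\<lambda>x. g x $ i)"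
  shows "bounded_linear g"
proof -
  have "\<exists>K. \<forall>x. norm (g x $ i) \<le> norm x * K" for i
    using bounded_linear.bounded[OF bl[of i]] by blast
  then obtain K where K: "\<And>i x. norm (g x $ i) \<le> norm x * K i" by metis
  show ?thesis
  proof (rule bounded_linear_intro[where K="sum K UNIV"])
    fix x y show "g (x + y) = g x + g y"
      using real_vector.linear_add[OF bounded_linear.linear[OF bl]] by (simp add: vec_eq_iff)
  next
    fix r x show "g (r *\<^sub>R x) = r *\<^sub>R g x"
      using real_vector.linear_scale[OF bounded_linear.linear[OF bl]] by (simp add: vec_eq_iff)
  next
    fix x
    have "norm (g x) \<le> (\<Sum>i\<in>UNIV. norm (g x $ i))"
      unfolding norm_vec_def by (rule L2_set_le_sum) simp
    also have "\<dots> \<le> (\<Sum>i\<in>UNIV. norm x * K i)" by (rule sum_mono) (rule K)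
    finally show "norm (g x) \<le> norm x * sum K UNIV" by (simp add: sum_distrib_left)
  qed
qed

definition Lam :: "(real^'n) blop \<Rightarrow> real^'n^'n" where
  "Lam B = matrix (bap B)"

lemma bounded_linear_Lam: "bounded_linear Lam"
  unfolding Lam_def matrix_def
  by (intro bl_vec) (simp add: bounded_linear_compose[OF bounded_linear_vec_nth bounded_linear_bap_left])

lemma Phi_mult: "Phi (A ** B) = Phi A * Phi B"
  by (metis (no_types, lifting) Phi_def bap_Phi bap_def bap_mult blinfun_eqI brep_inverse matrix_vector_mul_assoc)

lemma Phi_one: "Phi (mat 1) = 1"
  by (metis (no_types, lifting) Phi_def bap_Phi bap_def bap_one blinfun_eqI brep_inverse matrix_vector_mul_lid)

lemma Phi_power: "Phi q ^ k = Phi (matpow q k)"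
  by (induction k) (simp_all add: Phi_one Phi_mult)

lemma Lam_Phi: "Lam (Phi A) = A"
proof -
  have "bap (Phi A) = (*v) A" by (rule ext) simp
  then show ?thesis unfolding Lam_def by simp
qed

lemma mexp_Lam: "mexp s q = Lam (exp (s *\<^sub>R Phi q))"
proof -
  have "(\<lambda>n. (s *\<^sub>R Phi q)^n /\<^sub>R fact n) sums exp (s *\<^sub>R Phi q)" by (rule exp_converges)
  from bounded_linear.sums[OF bounded_linear_Lam this]
  have "(\<lambda>n. Lam ((s *\<^sub>R Phi q)^n /\<^sub>R fact n)) sums Lam (exp (s *\<^sub>R Phi q))" .
  moreover have "Lam ((s *\<^sub>R Phi q)^n /\<^sub>R fact n) = ((s ^ n) / fact n) *\<^sub>R matpow q n" for n
    by (simp add: Phi_power Lam_Phi divide_inverse_commute real_vector.linear_scale[OF bounded_linear.linear[OF bounded_linear_Lam]])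
  ultimately show ?thesis unfolding mexp_def by (metis (no_types, lifting) sums_unique sums_cong)
qed

lemma mexp_apply: "mexp s q *v u = bap (exp (s *\<^sub>R Phi q)) u"
  unfolding mexp_Lam Lam_def using matrix_vector_mul(2)[OF linear_bap_right] by metis


lemma bap_eqI: "(\<And>x. bap A x = bap B x) \<Longrightarrow> A = B"
  unfolding bap_def by (metis blinfun_eqI brep_inject)

lemma M0[simp]: "mexp 0 q *v u = u"
  by (simp add: mexp_apply)

lemma Madd: "mexp (s + t) q *v u = mexp s q *v (mexp t q *v u)"
proof -
  have "exp ((s + t) *\<^sub>R Phi q) = exp (s *\<^sub>R Phi q) * exp (t *\<^sub>R Phi q)"
    by (simp add: scaleR_add_left exp_add_commuting)
  then show ?thesis by (simp add: mexp_apply)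
qed

lemma Mderiv: "((\<lambda>s. mexp s q *v u) has_vector_derivative mexp s q *v (q *v u)) (at s within X)"
proof -
  have d: "((\<lambda>s. exp (s *\<^sub>R Phi q)) has_derivative (\<lambda>h. h *\<^sub>R (exp (s *\<^sub>R Phi q) * Phi q))) (at s within X)"
    using exp_scaleR_has_vector_derivative_right unfolding has_vector_derivative_def .
  have "((\<lambda>s. bap (exp (s *\<^sub>R Phi q)) u) has_derivative (\<lambda>h. bap (h *\<^sub>R (exp (s *\<^sub>R Phi q) * Phi q)) u)) (at s within X)"
    by (rule bounded_linear.has_derivative[OF bounded_linear_bap_left d])
  then show ?thesis unfolding has_vector_derivative_def mexp_apply
    by (simp add: bap_scaleR_left)
qed

lemma Mcont: "continuous_on X (\<lambda>s. mexp s q *v u)"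
  by (rule continuous_on_vector_derivative) (rule Mderiv)

lemma MFTC: "0 \<le> t \<Longrightarrow> ((\<lambda>s. mexp s q *v (q *v u)) has_integral (mexp t q *v u - u)) {0..t}"
  using fundamental_theorem_of_calculus[of 0 t "\<lambda>s. mexp s q *v u" "\<lambda>s. mexp s q *v (q *v u)", OF _ Mderiv]
  by simp

lemma Q_const: "is_Qmatrix q \<Longrightarrow> q *v (\<chi> i. c) = 0"
  unfolding is_Qmatrix_def
  by (simp add: vec_eq_iff matrix_vector_mult_def sum_distrib_right[symmetric])

lemma Mconst: "is_Qmatrix q \<Longrightarrow> 0 \<le> t \<Longrightarrow> mexp t q *v (\<chi> i. c) = (\<chi> i. c)"
  using MFTC[of t q "\<chi> i. c"] by (simp add: Q_const)

lemma Phi_add: "Phi (A + B) = Phi A + Phi B"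
  by (rule bap_eqI) (simp add: bap_add_left matrix_vector_mult_add_rdistrib)

lemma Phi_scaleR_one: "Phi (c *\<^sub>R mat 1) = c *\<^sub>R 1"
  by (rule bap_eqI) (simp add: bap_scaleR_left scaleR_matrix_vector_assoc[symmetric])

lemma mexp_shift: "mexp s (q + c *\<^sub>R mat 1) *v x = exp (s * c) *\<^sub>R (mexp s q *v x)"
proof -
  have "exp (s *\<^sub>R Phi (q + c *\<^sub>R mat 1)) = exp (s *\<^sub>R Phi q + of_real (s * c))"
    by (simp add: Phi_add Phi_scaleR_one scaleR_add_right of_real_def)
  also have "\<dots> = exp (s *\<^sub>R Phi q) * exp (of_real (s * c))"
    by (rule exp_add_commuting) (simp add: of_real_def)
  also have "\<dots> = exp (s *\<^sub>R Phi q) * of_real (exp (s * c))"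
    by (simp only: exp_of_real)
  also have "\<dots> = exp (s *\<^sub>R Phi q) * (exp (s * c) *\<^sub>R 1)"
    by (simp only: of_real_def)
  finally show ?thesis by (simp add: mexp_apply bap_scaleR_left)
qed

lemma matpow_nonneg:
  assumes "\<forall>i j. 0 \<le> A $ i $ j" shows "0 \<le> matpow A k $ i $ j"
proof (induction k arbitrary: i j)
  case 0 then show ?case by (simp add: mat_def)
next
  case (Suc k) then show ?case using assms
    by (simp add: matrix_matrix_mult_def sum_nonneg)
qed

lemma mexp_series: "(\<lambda>n. (s ^ n / fact n) *\<^sub>R (matpow q n *v x)) sums (mexp s q *v x)"
proof -
  have "(\<lambda>n. (s *\<^sub>R Phi q)^n /\<^sub>R fact n) sums exp (s *\<^sub>R Phi q)" by (rule exp_converges)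
  from bounded_linear.sums[OF bounded_linear_bap_left this, of x]
  show ?thesis
    by (simp add: mexp_apply bap_scaleR_left Phi_power divide_inverse_commute)
qed

lemma Mpos:
  assumes q: "is_Qmatrix q" and s: "0 \<le> s" and x: "\<forall>j. 0 \<le> x $ j"
  shows "0 \<le> (mexp s q *v x) $ i"
proof -
  define c where "c = (\<Sum>i\<in>UNIV. \<bar>q $ i $ i\<bar>)"
  define q' where "q' = q + c *\<^sub>R mat 1"
  have ci: "\<bar>q $ i $ i\<bar> \<le> c" for i unfolding c_def
    by (rule member_le_sum) auto
  have "0 \<le> q' $ i $ j" for i j
  proof (cases "i = j")
    case True then show ?thesis using ci[of i] by (simp add: q'_def mat_def)
  next
    case False then show ?thesis using q unfolding is_Qmatrix_def by (simp add: q'_def mat_def)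
  qed
  then have pw: "0 \<le> matpow q' n $ i $ j" for n i j by (intro matpow_nonneg) auto
  have "0 \<le> (mexp s q' *v x) $ i"
  proof (rule sums_le[of "\<lambda>_. 0"])
    show "(\<lambda>n. 0) sums (0::real)" by simp
    show "(\<lambda>n. ((s ^ n / fact n) *\<^sub>R (matpow q' n *v x)) $ i) sums (mexp s q' *v x) $ i"
      using bounded_linear.sums[OF bounded_linear_vec_nth mexp_series] .
    fix n show "0 \<le> ((s ^ n / fact n) *\<^sub>R (matpow q' n *v x)) $ i"
      using pw x s by (simp add: matrix_vector_mult_def sum_nonneg)
  qed
  then show ?thesis unfolding q'_def mexp_shift by (simp add: zero_le_mult_iff)
qed

lemma Mmono:
  assumes q: "is_Qmatrix q" and s: "0 \<le> s" and xy: "x \<le> y"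
  shows "mexp s q *v x \<le> mexp s q *v y"
proof -
  have "0 \<le> (mexp s q *v (y - x)) $ i" for i
    using Mpos[OF q s, of "y - x"] xy by (simp add: less_eq_vec_def)
  then show ?thesis by (simp add: less_eq_vec_def matrix_vector_mult_diff_distrib)
qed

lemma Mub:
  assumes q: "is_Qmatrix q" and s: "0 \<le> s" and x: "\<forall>j. x $ j \<le> c"
  shows "(mexp s q *v x) $ i \<le> c"
proof -
  have "mexp s q *v x \<le> mexp s q *v (\<chi> j. c)" using x by (intro Mmono[OF q s]) (simp add: less_eq_vec_def)
  then show ?thesis using Mconst[OF q s] by (simp add: less_eq_vec_def)
qed

lemma Mlb:
  assumes q: "is_Qmatrix q" and s: "0 \<le> s" and x: "\<forall>j. c \<le> x $ j"
  shows "c \<le> (mexp s q *v x) $ i"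
proof -
  have "mexp s q *v (\<chi> j. c) \<le> mexp s q *v x" using x by (intro Mmono[OF q s]) (simp add: less_eq_vec_def)
  then show ?thesis using Mconst[OF q s] by (simp add: less_eq_vec_def)
qed


definition C :: "(real \<Rightarrow> real^'n \<Rightarrow> real^'n) \<Rightarrow> real set \<Rightarrow> real^'n \<Rightarrow> real^'n" where
  "C E \<pi> u = Echain E (sorted_list_of_set \<pi>) u"

definition dinf :: "real^'n \<Rightarrow> real^'n \<Rightarrow> real \<Rightarrow> bool" where
  "dinf w v c \<longleftrightarrow> (\<forall>i. \<bar>w $ i - v $ i\<bar> \<le> c)"

lemma C_single[simp]: "C E {a} u = u"
  unfolding C_def by simp

lemma C_empty[simp]: "C E {} u = u"
  unfolding C_def by simp

lemma C_rec:
  assumes "finite \<pi>" "a = Min \<pi>" "\<pi> - {a} \<noteq> {}"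
  shows "C E \<pi> u = E (Min (\<pi> - {a}) - a) (C E (\<pi> - {a}) u)"
proof -
  have ne: "\<pi> \<noteq> {}" using assms by auto
  have "sorted_list_of_set \<pi> = a # sorted_list_of_set (\<pi> - {a})"
    using sorted_list_of_set_nonempty[OF assms(1) ne] assms(2) by simp
  moreover have "sorted_list_of_set (\<pi> - {a}) = Min (\<pi> - {a}) # sorted_list_of_set (\<pi> - {a} - {Min (\<pi> - {a})})"
    by (rule sorted_list_of_set_nonempty) (use assms in auto)
  ultimately show ?thesis unfolding C_def by simp
qed

lemma card_induct_fin:
  assumes "finite \<pi>" and step: "\<And>\<pi>. finite \<pi> \<Longrightarrow> (\<And>\<rho>. finite \<rho> \<Longrightarrow> card \<rho> < card \<pi> \<Longrightarrow> P \<rho>) \<Longrightarrow> P \<pi>"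
  shows "P \<pi>"
  using assms(1)
proof (induction "card \<pi>" arbitrary: \<pi> rule: less_induct)
  case less then show ?case using step by blast
qed

lemma sl_eq: "sorted_wrt (<) xs \<Longrightarrow> sorted_list_of_set (set xs) = xs"
  by (simp add: sorted_list_of_set_sort_remdups strict_sorted_iff distinct_remdups_id sorted_sort_id)

lemma Echain_map: "Echain E (map ((+) h) L) u = Echain E L u"
  by (induction E L u rule: Echain.induct) simp_all

lemma C_shift: "finite \<pi> \<Longrightarrow> C E ((+) h ` \<pi>) u = C E \<pi> u"
proof -
  assume fin: "finite \<pi>"
  let ?L = "sorted_list_of_set \<pi>"
  have "sorted_wrt (<) (map ((+) h) ?L)"
    unfolding sorted_wrt_map using strict_sorted_list_of_set[of \<pi>] by (simp add: sorted_wrt_mono_rel[of _ "(<)"])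
  then have "sorted_list_of_set (set (map ((+) h) ?L)) = map ((+) h) ?L" by (rule sl_eq)
  then have "sorted_list_of_set ((+) h ` \<pi>) = map ((+) h) ?L" using fin by simp
  then show ?thesis unfolding C_def by (simp add: Echain_map)
qed

lemma C_split:
  assumes "finite \<pi>" "s \<in> \<pi>"
  shows "C E \<pi> u = C E (\<pi> \<inter> {..s}) (C E (\<pi> \<inter> {s..}) u)"
  using assms
proof (induction "card \<pi>" arbitrary: \<pi> rule: less_induct)
  case (less \<pi>)
  define a where "a = Min \<pi>"
  have a: "a \<in> \<pi>" "\<forall>x\<in>\<pi>. a \<le> x" using less.prems unfolding a_def by (auto intro!: Min_in)
  show ?case
  proof (cases "a = s")
    case True
    then have "\<pi> \<inter> {..s} = {s}" "\<pi> \<inter> {s..} = \<pi>" using a by auto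
    then show ?thesis by simp
  next
    case False
    then have as: "a < s" using a less.prems by auto
    define \<pi>' where "\<pi>' = \<pi> - {a}"
    have fin': "finite \<pi>'" "s \<in> \<pi>'" using less.prems False \<pi>'_def by auto
    have card: "card \<pi>' < card \<pi>" using less.prems a unfolding \<pi>'_def by (meson card_Diff1_less)
    define b where "b = Min \<pi>'"
    have b: "b \<in> \<pi>'" "\<forall>x\<in>\<pi>'. b \<le> x" using fin' unfolding b_def by (auto intro!: Min_in)
    have bs: "b \<le> s" using b fin' by auto
    have IH: "C E \<pi>' u = C E (\<pi>' \<inter> {..s}) (C E (\<pi>' \<inter> {s..}) u)"
      using less.hyps[OF card fin'] .
    have eq1: "\<pi>' \<inter> {s..} = \<pi> \<inter> {s..}" using as \<pi>'_def by auto
    have r1: "C E \<pi> u = E (b - a) (C E \<pi>' u)"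
      using C_rec[OF less.prems(1) a_def] fin' unfolding \<pi>'_def b_def by auto
    have m1: "Min (\<pi> \<inter> {..s}) = a" using a as less.prems by (intro Min_eqI) auto
    have m2: "(\<pi> \<inter> {..s}) - {a} = \<pi>' \<inter> {..s}" unfolding \<pi>'_def by auto
    have m3: "Min (\<pi>' \<inter> {..s}) = b" using b bs fin' by (intro Min_eqI) auto
    have r2: "C E (\<pi> \<inter> {..s}) w = E (b - a) (C E (\<pi>' \<inter> {..s}) w)" for w
      using C_rec[of "\<pi> \<inter> {..s}" a E w] less.prems(1) m1 m2 m3 fin' by auto
    show ?thesis using r1 r2 IH eq1 by simp
  qed
qed


lemma C_triv: "finite \<pi> \<Longrightarrow> \<pi> - {Min \<pi>} = {} \<Longrightarrow> C E \<pi> u = u"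
proof -
  assume "finite \<pi>" "\<pi> - {Min \<pi>} = {}"
  then have "\<pi> = {} \<or> \<pi> = {Min \<pi>}" by auto
  then show ?thesis by (metis C_empty C_single)
qed

lemma C_step:
  assumes "finite \<pi>" "\<pi> - {Min \<pi>} \<noteq> {}"
  obtains a b where "a = Min \<pi>" "b = Min (\<pi> - {a})" "a \<in> \<pi>" "b \<in> \<pi> - {a}" "a < b"
    "\<forall>x\<in>\<pi>. a \<le> x" "\<forall>x\<in>\<pi> - {a}. b \<le> x"
    "\<And>u. C E \<pi> u = E (b - a) (C E (\<pi> - {a}) u)"
proof -
  define a where "a = Min \<pi>"
  define b where "b = Min (\<pi> - {a})"
  have a: "a \<in> \<pi>" "\<forall>x\<in>\<pi>. a \<le> x" using assms unfolding a_def by (auto intro!: Min_in)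
  have fa: "finite (\<pi> - {a})" "\<pi> - {a} \<noteq> {}" using assms a_def by auto
  have b: "b \<in> \<pi> - {a}" "\<forall>x\<in>\<pi> - {a}. b \<le> x" using Min_in[OF fa] Min_le[OF fa(1)] unfolding b_def by auto
  have "a < b" using a b by force
  moreover have "C E \<pi> u = E (b - a) (C E (\<pi> - {a}) u)" for u
    using C_rec[OF assms(1) a_def] assms unfolding a_def b_def by auto
  ultimately show ?thesis using that a b a_def b_def by blast
qed

lemma C_mono:
  assumes Emono: "\<And>h x y. 0 < h \<Longrightarrow> x \<le> y \<Longrightarrow> E h x \<le> E h y"
  shows "finite \<pi> \<Longrightarrow> x \<le> y \<Longrightarrow> C E \<pi> x \<le> C E \<pi> y"
proof (induction "card \<pi>" arbitrary: \<pi> rule: less_induct)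
  case (less \<pi>)
  show ?case
  proof (cases "\<pi> - {Min \<pi>} = {}")
    case True then show ?thesis using less.prems C_triv by metis
  next
    case False
    then obtain a b where ab: "a = Min \<pi>" "a \<in> \<pi>" "a < b"
      "\<And>u. C E \<pi> u = E (b - a) (C E (\<pi> - {a}) u)"
      using C_step[OF less.prems(1) False] by blast
    have "card (\<pi> - {a}) < card \<pi>" using less.prems ab by (meson card_Diff1_less)
    then have "C E (\<pi> - {a}) x \<le> C E (\<pi> - {a}) y" using less.hyps less.prems by auto
    then have "E (b - a) (C E (\<pi> - {a}) x) \<le> E (b - a) (C E (\<pi> - {a}) y)" using ab Emono by simp
    then show ?thesis unfolding ab(4) .
  qed
qed

lemma C_refine:
  assumes Emono: "\<And>h x y. 0 < h \<Longrightarrow> x \<le> y \<Longrightarrow> E h x \<le> E h y"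
    and Esub: "\<And>h1 h2 x. 0 < h1 \<Longrightarrow> 0 < h2 \<Longrightarrow> E (h1 + h2) x \<le> E h1 (E h2 x)"
  shows "finite \<pi> \<Longrightarrow> x \<in> \<pi> \<Longrightarrow> y \<in> \<pi> \<Longrightarrow> x \<le> r \<Longrightarrow> r \<le> y \<Longrightarrow> C E \<pi> u \<le> C E (insert r \<pi>) u"
proof (induction "card \<pi>" arbitrary: \<pi> x rule: less_induct)
  case (less \<pi>)
  show ?case
  proof (cases "r \<in> \<pi>")
    case True then show ?thesis by (simp add: insert_absorb)
  next
    case rn: False
    have fin: "finite \<pi>" using less.prems(1) .
    have mx: "Min \<pi> \<le> x" using fin less.prems(2) by (rule Min_le)
    have xr: "x < r" using less.prems(2,4) rn by (cases "x = r") auto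
    have ar: "Min \<pi> < r" using mx xr by linarith
    have yr: "r < y" using less.prems(3,5) rn by (cases "y = r") auto
    have yin: "y \<in> \<pi> - {Min \<pi>}" using less.prems(3) ar yr by auto
    then have ne: "\<pi> - {Min \<pi>} \<noteq> {}" by blast
    obtain a b where ab: "a = Min \<pi>" "b = Min (\<pi> - {a})" "a \<in> \<pi>" "b \<in> \<pi> - {a}" "a < b"
      "\<forall>x\<in>\<pi>. a \<le> x" "\<forall>x\<in>\<pi> - {a}. b \<le> x"
      "\<And>u. C E \<pi> u = E (b - a) (C E (\<pi> - {a}) u)"
      using C_step[OF fin ne] by blast
    define \<pi>' where "\<pi>' = \<pi> - {a}"
    have fin': "finite \<pi>'" using fin \<pi>'_def by simp
    have ar': "a < r" using ar ab(1) by simp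
    have ins: "insert r \<pi> - {a} = insert r \<pi>'" using ar' unfolding \<pi>'_def by auto
    have fin2: "finite (insert r \<pi>)" using fin by simp
    have mi: "Min (insert r \<pi>) = a"
      by (rule Min_eqI) (use fin2 ab(3,6) ar' in auto)
    have ne2: "insert r \<pi> - {a} \<noteq> {}" using ins by simp
    have rec2: "C E (insert r \<pi>) u = E (Min (insert r \<pi>') - a) (C E (insert r \<pi>') u)"
      using C_rec[OF fin2 mi[symmetric] ne2, of E u] ins by simp
    show ?thesis
    proof (cases "r < b")
      case True
      have rz: "\<forall>z\<in>\<pi>'. r \<le> z" using ab(7) True unfolding \<pi>'_def by force
      have mr: "Min (insert r \<pi>') = r"
        by (rule Min_eqI) (use fin' rz in auto)
      have rr: "insert r \<pi>' - {r} = \<pi>'" using rn \<pi>'_def by auto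
      have bm: "Min \<pi>' = b" using ab(2) \<pi>'_def by simp
      have ne3: "insert r \<pi>' - {r} \<noteq> {}" using rr ab(4) \<pi>'_def by auto
      have "C E (insert r \<pi>') u = E (Min (insert r \<pi>' - {r}) - r) (C E (insert r \<pi>' - {r}) u)"
        using C_rec[OF _ mr[symmetric] ne3, of E u] fin' by simp
      then have "C E (insert r \<pi>') u = E (b - r) (C E \<pi>' u)" using rr bm by simp
      then have "C E (insert r \<pi>) u = E (r - a) (E (b - r) (C E \<pi>' u))"
        using rec2 mr by simp
      moreover have "E ((r - a) + (b - r)) (C E \<pi>' u) \<le> E (r - a) (E (b - r) (C E \<pi>' u))"
        using True ar' by (intro Esub) auto
      ultimately show ?thesis using ab(8)[of u] \<pi>'_def by simp
    next
      case False
      then have br: "b < r" using ab(4) rn by (cases "b = r") auto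
      have mb: "Min (insert r \<pi>') = b"
        by (rule Min_eqI) (use fin' ab(4,7) br \<pi>'_def in auto)
      have y': "y \<in> \<pi>'" using yin ab(1) \<pi>'_def by simp
      have card: "card \<pi>' < card \<pi>" using fin ab(3) \<pi>'_def by (meson card_Diff1_less)
      have "C E \<pi>' u \<le> C E (insert r \<pi>') u"
        using less.hyps[OF card fin' _ y' _ less.prems(5), of b] ab(4) br \<pi>'_def by simp
      then have "E (b - a) (C E \<pi>' u) \<le> E (b - a) (C E (insert r \<pi>') u)"
        using ab(5) by (intro Emono) auto
      then show ?thesis using rec2 mb ab(8)[of u] \<pi>'_def by simp
    qed
  qed
qed

lemma C_refine_fin:
  assumes Emono: "\<And>h x y. 0 < h \<Longrightarrow> x \<le> y \<Longrightarrow> E h x \<le> E h y"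
    and Esub: "\<And>h1 h2 x. 0 < h1 \<Longrightarrow> 0 < h2 \<Longrightarrow> E (h1 + h2) x \<le> E h1 (E h2 x)"
  shows "finite F \<Longrightarrow> finite \<pi> \<Longrightarrow> x \<in> \<pi> \<Longrightarrow> y \<in> \<pi> \<Longrightarrow> \<forall>r\<in>F. x \<le> r \<and> r \<le> y
    \<Longrightarrow> C E \<pi> u \<le> C E (\<pi> \<union> F) u"
proof (induction F rule: finite_induct)
  case empty then show ?case by simp
next
  case (insert r F)
  have "C E (\<pi> \<union> F) u \<le> C E (insert r (\<pi> \<union> F)) u"
    using C_refine[OF Emono Esub, of "\<pi> \<union> F" x y r u] insert by auto
  then show ?case using insert by (simp add: order_trans)
qed

lemma dinf_trans: "dinf w v c1 \<Longrightarrow> dinf v z c2 \<Longrightarrow> dinf w z (c1 + c2)"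
  unfolding dinf_def
proof
  fix i assume "\<forall>i. \<bar>w $ i - v $ i\<bar> \<le> c1" "\<forall>i. \<bar>v $ i - z $ i\<bar> \<le> c2"
  then have "\<bar>w $ i - v $ i\<bar> \<le> c1" "\<bar>v $ i - z $ i\<bar> \<le> c2" by auto
  then show "\<bar>w $ i - z $ i\<bar> \<le> c1 + c2" by arith
qed

lemma C_nonexp:
  assumes Enon: "\<And>h w v c. 0 < h \<Longrightarrow> dinf w v c \<Longrightarrow> dinf (E h w) (E h v) c"
  shows "finite \<pi> \<Longrightarrow> dinf w v c \<Longrightarrow> dinf (C E \<pi> w) (C E \<pi> v) c"
proof (induction "card \<pi>" arbitrary: \<pi> rule: less_induct)
  case (less \<pi>)
  show ?case
  proof (cases "\<pi> - {Min \<pi>} = {}")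
    case True then show ?thesis using less.prems C_triv by metis
  next
    case False
    then obtain a b where ab: "a = Min \<pi>" "a \<in> \<pi>" "a < b"
      "\<And>u. C E \<pi> u = E (b - a) (C E (\<pi> - {a}) u)"
      using C_step[OF less.prems(1) False] by blast
    have "card (\<pi> - {a}) < card \<pi>" using less.prems ab by (meson card_Diff1_less)
    then have "dinf (C E (\<pi> - {a}) w) (C E (\<pi> - {a}) v) c" using less.hyps less.prems by auto
    then have "dinf (E (b - a) (C E (\<pi> - {a}) w)) (E (b - a) (C E (\<pi> - {a}) v)) c" using ab Enon by simp
    then show ?thesis unfolding ab(4) .
  qed
qed

lemma C_drift:
  assumes Enon: "\<And>h w v c. 0 < h \<Longrightarrow> dinf w v c \<Longrightarrow> dinf (E h w) (E h v) c"
    and Edr: "\<And>h. 0 < h \<Longrightarrow> dinf (E h v) v (h * K)"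
  shows "finite \<pi> \<Longrightarrow> \<pi> \<noteq> {} \<Longrightarrow> dinf (C E \<pi> v) v ((Max \<pi> - Min \<pi>) * K)"
proof (induction "card \<pi>" arbitrary: \<pi> rule: less_induct)
  case (less \<pi>)
  show ?case
  proof (cases "\<pi> - {Min \<pi>} = {}")
    case True
    then have "\<pi> = {Min \<pi>}" using less.prems by auto
    then have "Max \<pi> = Min \<pi>" by (metis Max_singleton)
    moreover have "C E \<pi> v = v" using C_triv[OF less.prems(1) True] .
    ultimately show ?thesis by (simp add: dinf_def)
  next
    case False
    then obtain a b where ab: "a = Min \<pi>" "b = Min (\<pi> - {a})" "a \<in> \<pi>" "b \<in> \<pi> - {a}" "a < b"
      "\<forall>x\<in>\<pi>. a \<le> x" "\<forall>x\<in>\<pi> - {a}. b \<le> x"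
      "\<And>u. C E \<pi> u = E (b - a) (C E (\<pi> - {a}) u)"
      using C_step[OF less.prems(1) False] by blast
    have card: "card (\<pi> - {a}) < card \<pi>" using less.prems ab by (meson card_Diff1_less)
    have mx: "Max (\<pi> - {a}) = Max \<pi>"
    proof (rule Max_eqI)
      show "finite (\<pi> - {a})" using less.prems by auto
      show "y \<le> Max \<pi>" if "y \<in> \<pi> - {a}" for y using that less.prems by auto
      have "Max \<pi> \<in> \<pi>" using less.prems by auto
      moreover have "Max \<pi> \<noteq> a" using ab less.prems by (metis DiffE Max_ge leD)
      ultimately show "Max \<pi> \<in> \<pi> - {a}" by auto
    qed
    have f1: "finite (\<pi> - {a})" "\<pi> - {a} \<noteq> {}" using less.prems(1) ab(4) by auto
    have "dinf (C E (\<pi> - {a}) v) v ((Max (\<pi> - {a}) - Min (\<pi> - {a})) * K)"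
      by (rule less.hyps[OF card f1])
    then have d1: "dinf (E (b - a) (C E (\<pi> - {a}) v)) (E (b - a) v) ((Max \<pi> - b) * K)"
      using Enon ab mx by simp
    have d2: "dinf (E (b - a) v) v ((b - a) * K)" using Edr ab by simp
    have "(Max \<pi> - b) * K + (b - a) * K = (Max \<pi> - Min \<pi>) * K" using ab by (simp add: algebra_simps)
    then show ?thesis using dinf_trans[OF d1 d2] unfolding ab(8) by simp
  qed
qed


lemma vsup_nth: "vsup A g $ i = (SUP a\<in>A. g a $ i)"
  unfolding vsup_def by simp

lemma vsup_upper: "a \<in> A \<Longrightarrow> (\<And>i. bdd_above ((\<lambda>a. g a $ i) ` A)) \<Longrightarrow> g a \<le> vsup A g"
  unfolding less_eq_vec_def vsup_nth by (auto intro: cSUP_upper)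

lemma vsup_least: "A \<noteq> {} \<Longrightarrow> (\<And>a. a \<in> A \<Longrightarrow> g a \<le> y) \<Longrightarrow> vsup A g \<le> y"
  unfolding less_eq_vec_def vsup_nth by (auto intro: cSUP_least)

lemma vsup_cong: "(\<And>a. a \<in> A \<Longrightarrow> g a = g' a) \<Longrightarrow> vsup A g = vsup A g'"
  unfolding vsup_def by (simp cong: SUP_cong)

lemma vsup_const: "A \<noteq> {} \<Longrightarrow> vsup A (\<lambda>_. v) = v"
  unfolding vsup_def by (simp add: vec_eq_iff)

lemma dinf_iff: "dinf w v c \<longleftrightarrow> w \<le> v + (\<chi> i. c) \<and> v \<le> w + (\<chi> i. c)"
  unfolding dinf_def less_eq_vec_def by (auto simp: abs_le_iff algebra_simps)

lemma M_addc: "is_Qmatrix q \<Longrightarrow> 0 \<le> h \<Longrightarrow> mexp h q *v (x + (\<chi> i. c)) = mexp h q *v x + (\<chi> i. c)"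
  by (simp add: matrix_vector_right_distrib Mconst)

lemma Eh_zero_f: "Eh P (\<lambda>_. 0) h v = vsup P (\<lambda>q. mexp h q *v v)"
  unfolding Eh_def Sq_def by simp

locale nsetup =
  fixes P :: "(real^'n^'n) set"
  assumes Qm: "\<forall>q\<in>P. is_Qmatrix q"
    and Pne: "P \<noteq> {}"
    and qbdd: "\<forall>v. \<exists>K. \<forall>q\<in>P. \<forall>i. \<bar>(q *v v) $ i\<bar> \<le> K"
begin

definition E0 :: "real \<Rightarrow> real^'n \<Rightarrow> real^'n" where
  "E0 h v = vsup P (\<lambda>q. mexp h q *v v)"

lemma E0_bdd: "0 \<le> h \<Longrightarrow> bdd_above ((\<lambda>q. (mexp h q *v v) $ i) ` P)"
proof -
  assume h: "0 \<le> h"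
  have "(mexp h q *v v) $ i \<le> (\<Sum>j\<in>UNIV. \<bar>v $ j\<bar>)" if "q \<in> P" for q
  proof (rule Mub)
    show "is_Qmatrix q" using Qm that by auto
    show "\<forall>j. v $ j \<le> (\<Sum>j\<in>UNIV. \<bar>v $ j\<bar>)"
      using member_le_sum[of _ UNIV "\<lambda>j. \<bar>v $ j\<bar>"] by (metis UNIV_I abs_ge_self finite order_trans abs_ge_zero)
  qed (rule h)
  then show ?thesis by (meson bdd_aboveI2)
qed

lemma E0_upper: "q \<in> P \<Longrightarrow> 0 \<le> h \<Longrightarrow> mexp h q *v v \<le> E0 h v"
  unfolding E0_def by (rule vsup_upper) (auto intro: E0_bdd)

lemma E0_least: "(\<And>q. q \<in> P \<Longrightarrow> mexp h q *v v \<le> y) \<Longrightarrow> E0 h v \<le> y"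
  unfolding E0_def by (rule vsup_least[OF Pne])

lemma E0_0: "E0 0 v = v"
  unfolding E0_def by (simp add: vsup_const Pne)

lemma E0_mono: "0 \<le> h \<Longrightarrow> x \<le> y \<Longrightarrow> E0 h x \<le> E0 h y"
  by (rule E0_least) (meson E0_upper Mmono Qm order_trans)

lemma E0_sub: "0 \<le> h1 \<Longrightarrow> 0 \<le> h2 \<Longrightarrow> E0 (h1 + h2) x \<le> E0 h1 (E0 h2 x)"
proof (rule E0_least)
  fix q assume q: "q \<in> P" and h: "0 \<le> h1" "0 \<le> h2"
  have "mexp (h1 + h2) q *v x = mexp h1 q *v (mexp h2 q *v x)" by (rule Madd)
  also have "\<dots> \<le> mexp h1 q *v (E0 h2 x)" using Mmono Qm q h E0_upper by blast
  also have "\<dots> \<le> E0 h1 (E0 h2 x)" using E0_upper q h by blast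
  finally show "mexp (h1 + h2) q *v x \<le> E0 h1 (E0 h2 x)" .
qed

lemma E0_nonexp_half: "0 \<le> h \<Longrightarrow> w \<le> v + (\<chi> i. c) \<Longrightarrow> E0 h w \<le> E0 h v + (\<chi> i. c)"
proof (rule E0_least)
  fix q assume q: "q \<in> P" and h: "0 \<le> h" and wv: "w \<le> v + (\<chi> i. c)"
  have "mexp h q *v w \<le> mexp h q *v (v + (\<chi> i. c))" using Mmono Qm q h wv by blast
  also have "\<dots> = mexp h q *v v + (\<chi> i. c)" using M_addc Qm q h by blast
  also have "\<dots> \<le> E0 h v + (\<chi> i. c)" using E0_upper q h by (simp add: add_right_mono)
  finally show "mexp h q *v w \<le> E0 h v + (\<chi> i. c)" .
qed

lemma E0_nonexp: "0 \<le> h \<Longrightarrow> dinf w v c \<Longrightarrow> dinf (E0 h w) (E0 h v) c"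
  unfolding dinf_iff using E0_nonexp_half by blast

lemma Kbound: obtains K where "0 \<le> K" "\<And>q i. q \<in> P \<Longrightarrow> \<bar>(q *v v) $ i\<bar> \<le> K"
proof -
  obtain K where K: "\<forall>q\<in>P. \<forall>i. \<bar>(q *v v) $ i\<bar> \<le> K" using qbdd by blast
  show ?thesis by (rule that[of "max K 0"]) (use K in \<open>auto intro: max.coboundedI1\<close>)
qed

lemma M_drift:
  assumes q: "q \<in> P" and h: "0 \<le> h" and K: "\<And>i. \<bar>(q *v v) $ i\<bar> \<le> K"
  shows "dinf (mexp h q *v v) v (h * K)"
  unfolding dinf_def
proof
  fix i
  have qq: "is_Qmatrix q" using Qm q by auto
  have int: "((\<lambda>s. (mexp s q *v (q *v v)) $ i) has_integral (mexp h q *v v - v) $ i) {0..h}"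
    using has_integral_linear[OF MFTC[OF h, of q v] bounded_linear_vec_nth[of i]] by (simp add: o_def)
  have Ku: "\<forall>j. (q *v v) $ j \<le> K"
  proof fix j show "(q *v v) $ j \<le> K" using K[of j] by linarith qed
  have Kl: "\<forall>j. - K \<le> (q *v v) $ j"
  proof fix j show "- K \<le> (q *v v) $ j" using K[of j] by linarith qed
  have b: "\<bar>(mexp s q *v (q *v v)) $ i\<bar> \<le> K" if "s \<in> {0..h}" for s
  proof -
    have "(mexp s q *v (q *v v)) $ i \<le> K" using that by (intro Mub[OF qq _ Ku]) auto
    moreover have "- K \<le> (mexp s q *v (q *v v)) $ i" using that by (intro Mlb[OF qq _ Kl]) auto
    ultimately show ?thesis by auto
  qed
  have c: "((\<lambda>s. K) has_integral h * K) {0..h}" using has_integral_const_real[of K 0 h] h by simp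
  have c2: "((\<lambda>s. - K) has_integral - (h * K)) {0..h}" using has_integral_const_real[of "-K" 0 h] h by simp
  have "(mexp h q *v v - v) $ i \<le> h * K" using has_integral_le[OF int c] b by (auto simp: abs_le_iff)
  moreover have "- (h * K) \<le> (mexp h q *v v - v) $ i"
  proof (rule has_integral_le[OF c2 int])
    fix s assume "s \<in> {0..h}" then show "- K \<le> (mexp s q *v (q *v v)) $ i" using b[of s] by linarith
  qed
  ultimately show "\<bar>(mexp h q *v v) $ i - v $ i\<bar> \<le> h * K" by auto
qed

lemma E0_drift:
  assumes h: "0 \<le> h" and K: "\<And>q i. q \<in> P \<Longrightarrow> \<bar>(q *v v) $ i\<bar> \<le> K"
  shows "dinf (E0 h v) v (h * K)"
  unfolding dinf_iff
proof
  show "E0 h v \<le> v + (\<chi> i. h * K)"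
    by (rule E0_least) (use M_drift[OF _ h K] in \<open>auto simp: dinf_iff\<close>)
  obtain q where q: "q \<in> P" using Pne by auto
  have "v \<le> mexp h q *v v + (\<chi> i. h * K)" using M_drift[OF q h K[OF q]] by (auto simp: dinf_iff)
  also have "\<dots> \<le> E0 h v + (\<chi> i. h * K)" using E0_upper[OF q h] by (simp add: add_right_mono)
  finally show "v \<le> E0 h v + (\<chi> i. h * K)" .
qed

end


lemma part_D:
  assumes "\<pi> \<in> partitions t"
  shows "finite \<pi>" "0 \<in> \<pi>" "t \<in> \<pi>" "\<And>x. x \<in> \<pi> \<Longrightarrow> 0 \<le> x \<and> x \<le> t" "Min \<pi> = 0" "Max \<pi> = t" "\<pi> \<noteq> {}"
proof -
  show f: "finite \<pi>" and z: "0 \<in> \<pi>" using assms unfolding partitions_def by auto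
  have m: "Max \<pi> = t" "\<pi> \<subseteq> {0..}" using assms unfolding partitions_def by auto
  show "t \<in> \<pi>" using Max_in[OF f] z m by auto
  show "\<And>x. x \<in> \<pi> \<Longrightarrow> 0 \<le> x \<and> x \<le> t" using m f by auto
  show "Min \<pi> = 0" using f z m by (intro Min_eqI) auto
  show "Max \<pi> = t" by (fact m(1))
  show "\<pi> \<noteq> {}" using z by auto
qed

lemma part_I:
  assumes "finite \<pi>" "0 \<in> \<pi>" "t \<in> \<pi>" "\<And>x. x \<in> \<pi> \<Longrightarrow> 0 \<le> x \<and> x \<le> t"
  shows "\<pi> \<in> partitions t"
proof -
  have "Max \<pi> = t" using assms by (intro Max_eqI) auto
  then show ?thesis using assms unfolding partitions_def by auto
qed

context nsetup
begin

lemma Eh_E0: "Eh P (\<lambda>_. 0) = E0"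
  by (intro ext) (simp add: Eh_zero_f E0_def)

lemma Eh_0: "Eh P f 0 u = u"
  unfolding Eh_def Sq_def by (simp add: vsup_const Pne)

lemma Epi_C: "\<pi> \<in> partitions t \<Longrightarrow> Epi P f \<pi> u = C (Eh P f) \<pi> u"
  unfolding Epi_def C_def by (simp add: Eh_0)

definition Sig :: "real \<Rightarrow> real^'n \<Rightarrow> real^'n" where
  "Sig t v = nisio P (\<lambda>_. 0) t v"

lemma Sig_eq: "Sig t v = vsup (partitions t) (\<lambda>\<pi>. C E0 \<pi> v)"
  unfolding Sig_def nisio_def by (rule vsup_cong) (simp add: Epi_C Eh_E0)

lemma part_ne: "0 \<le> t \<Longrightarrow> partitions t \<noteq> {}"
  using part_I[of "{0, t}" t] by auto

lemma C0_drift: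
  assumes K: "0 \<le> K" "\<And>q i. q \<in> P \<Longrightarrow> \<bar>(q *v v) $ i\<bar> \<le> K"
    and fin: "finite \<pi>" "\<pi> \<noteq> {}"
  shows "dinf (C E0 \<pi> v) v ((Max \<pi> - Min \<pi>) * K)"
  by (rule C_drift[OF _ _ fin]) (auto intro: E0_nonexp E0_drift K)

lemma Sig_bdd: "bdd_above ((\<lambda>\<pi>. C E0 \<pi> v $ i) ` partitions t)"
proof -
  obtain K where K: "0 \<le> K" "\<And>q i. q \<in> P \<Longrightarrow> \<bar>(q *v v) $ i\<bar> \<le> K" using Kbound[of v] by blast
  have "C E0 \<pi> v $ i \<le> v $ i + t * K" if "\<pi> \<in> partitions t" for \<pi>
  proof -
    have "dinf (C E0 \<pi> v) v ((Max \<pi> - Min \<pi>) * K)"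
      using C0_drift[OF K] part_D[OF that] by blast
    then show ?thesis using part_D[OF that] unfolding dinf_def by (smt (verit) real_0_le_add_iff)
  qed
  then show ?thesis by (meson bdd_aboveI2)
qed

lemma Sig_upper: "\<pi> \<in> partitions t \<Longrightarrow> C E0 \<pi> v \<le> Sig t v"
  unfolding Sig_eq by (rule vsup_upper) (auto intro: Sig_bdd)

lemma Sig_least: "0 \<le> t \<Longrightarrow> (\<And>\<pi>. \<pi> \<in> partitions t \<Longrightarrow> C E0 \<pi> v \<le> y) \<Longrightarrow> Sig t v \<le> y"
  unfolding Sig_eq by (rule vsup_least[OF part_ne])

lemma C_pair: "0 < s \<Longrightarrow> C E (insert a {a + s}) v = E s (C E {a + s} v)"
  using C_rec[of "{a, a + s}" a E v] by simp

lemma E0_le_Sig: "0 \<le> s \<Longrightarrow> E0 s v \<le> Sig s v"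
proof -
  assume s: "0 \<le> s"
  have p: "{0, s} \<in> partitions s" using s by (intro part_I) auto
  show ?thesis
  proof (cases "s = 0")
    case True
    then show ?thesis using Sig_upper[OF p, of v] by (simp add: E0_0)
  next
    case False
    then have "C E0 {0, s} v = E0 s v" using C_pair[of s E0 0 v] s by simp
    then show ?thesis using Sig_upper[OF p, of v] by simp
  qed
qed

lemma E0_pos: "0 < h \<Longrightarrow> x \<le> y \<Longrightarrow> E0 h x \<le> E0 h y"
  by (rule E0_mono) auto

lemma E0_subp: "0 < h1 \<Longrightarrow> 0 < h2 \<Longrightarrow> E0 (h1 + h2) x \<le> E0 h1 (E0 h2 x)"
  by (rule E0_sub) auto

lemma Sig_lip:
  assumes K: "0 \<le> K" "\<And>q i. q \<in> P \<Longrightarrow> \<bar>(q *v v) $ i\<bar> \<le> K"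
    and st: "0 \<le> s" "s \<le> t"
  shows "dinf (Sig t v) (Sig s v) ((t - s) * K)"
proof -
  have nonexp: "dinf (C E0 \<rho> w) (C E0 \<rho> v') c" if "finite \<rho>" "dinf w v' c" for \<rho> w v' c
    by (rule C_nonexp[OF _ that]) (auto intro: E0_nonexp)
  have A: "C E0 \<pi> v \<le> Sig t v + (\<chi> i. (t - s) * K)" if p: "\<pi> \<in> partitions s" for \<pi>
  proof -
    note pd = part_D[OF p]
    define \<pi>' where "\<pi>' = insert t \<pi>"
    have p': "\<pi>' \<in> partitions t" unfolding \<pi>'_def
    proof (rule part_I)
      show "x \<in> insert t \<pi> \<Longrightarrow> 0 \<le> x \<and> x \<le> t" for x using pd(4)[of x] st by auto
    qed (use pd in auto)
    have fin': "finite \<pi>'" "s \<in> \<pi>'" using pd unfolding \<pi>'_def by auto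
    have e1: "\<pi>' \<inter> {..s} = \<pi>"
    proof
      show "\<pi>' \<inter> {..s} \<subseteq> \<pi>" using pd(3) st unfolding \<pi>'_def by auto
      show "\<pi> \<subseteq> \<pi>' \<inter> {..s}" using pd(4) unfolding \<pi>'_def by auto
    qed
    have e2: "\<pi>' \<inter> {s..} = {s, t}"
    proof
      show "\<pi>' \<inter> {s..} \<subseteq> {s, t}" using pd(4) unfolding \<pi>'_def by fastforce
      show "{s, t} \<subseteq> \<pi>' \<inter> {s..}" using pd(3) st unfolding \<pi>'_def by auto
    qed
    have spl: "C E0 \<pi>' v = C E0 \<pi> (C E0 {s, t} v)" using C_split[OF fin'] e1 e2 by simp
    have "dinf (C E0 {s, t} v) v ((Max {s, t} - Min {s, t}) * K)" by (rule C0_drift[OF K]) auto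
    then have "dinf (C E0 {s, t} v) v ((t - s) * K)" using st by (simp add: max_def min_def)
    then have "dinf (C E0 \<pi>' v) (C E0 \<pi> v) ((t - s) * K)" using spl nonexp pd(1) by simp
    then have "C E0 \<pi> v \<le> C E0 \<pi>' v + (\<chi> i. (t - s) * K)" by (simp add: dinf_iff)
    also have "\<dots> \<le> Sig t v + (\<chi> i. (t - s) * K)" using Sig_upper[OF p'] by (simp add: add_right_mono)
    finally show ?thesis .
  qed
  have B: "C E0 \<pi> v \<le> Sig s v + (\<chi> i. (t - s) * K)" if p: "\<pi> \<in> partitions t" for \<pi>
  proof -
    note pd = part_D[OF p]
    define \<pi>' where "\<pi>' = insert s \<pi>"
    have p': "\<pi>' \<in> partitions t" unfolding \<pi>'_def
    proof (rule part_I)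
      show "x \<in> insert s \<pi> \<Longrightarrow> 0 \<le> x \<and> x \<le> t" for x using pd(4)[of x] st by auto
    qed (use pd in auto)
    have fin': "finite \<pi>'" "s \<in> \<pi>'" using pd unfolding \<pi>'_def by auto
    have r: "C E0 \<pi> v \<le> C E0 \<pi>' v" unfolding \<pi>'_def
      by (rule C_refine[of E0, OF _ _ pd(1) pd(2) pd(3)]) (use st E0_pos E0_subp in auto)
    have spl: "C E0 \<pi>' v = C E0 (\<pi>' \<inter> {..s}) (C E0 (\<pi>' \<inter> {s..}) v)" by (rule C_split[OF fin'])
    have p2: "\<pi>' \<inter> {..s} \<in> partitions s"
    proof (rule part_I)
      show "x \<in> \<pi>' \<inter> {..s} \<Longrightarrow> 0 \<le> x \<and> x \<le> s" for x using pd(4)[of x] st unfolding \<pi>'_def by auto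
    qed (use pd st fin' in \<open>auto simp: \<pi>'_def\<close>)
    have f3: "finite (\<pi>' \<inter> {s..})" "\<pi>' \<inter> {s..} \<noteq> {}" using fin' by auto
    have mx: "Max (\<pi>' \<inter> {s..}) = t"
    proof (rule Max_eqI)
      show "y \<in> \<pi>' \<inter> {s..} \<Longrightarrow> y \<le> t" for y using pd(4)[of y] st unfolding \<pi>'_def by auto
    qed (use pd st f3 in \<open>auto simp: \<pi>'_def\<close>)
    have mn: "Min (\<pi>' \<inter> {s..}) = s"
      by (rule Min_eqI) (use f3 fin' in auto)
    have "dinf (C E0 (\<pi>' \<inter> {s..}) v) v ((t - s) * K)" using C0_drift[OF K f3] mx mn by simp
    then have "dinf (C E0 \<pi>' v) (C E0 (\<pi>' \<inter> {..s}) v) ((t - s) * K)" using spl nonexp fin' by simp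
    then have "C E0 \<pi>' v \<le> C E0 (\<pi>' \<inter> {..s}) v + (\<chi> i. (t - s) * K)" by (simp add: dinf_iff)
    also have "\<dots> \<le> Sig s v + (\<chi> i. (t - s) * K)" using Sig_upper[OF p2] by (simp add: add_right_mono)
    finally show ?thesis using r by simp
  qed
  have "Sig s v \<le> Sig t v + (\<chi> i. (t - s) * K)" by (rule Sig_least) (use st A in auto)
  moreover have "Sig t v \<le> Sig s v + (\<chi> i. (t - s) * K)" by (rule Sig_least) (use st B in auto)
  ultimately show ?thesis by (simp add: dinf_iff)
qed

end


context nsetup
begin

lemma Sig_cont: "continuous_on {0..} (\<lambda>s. Sig s v)"
proof -
  obtain K where K: "0 \<le> K" "\<And>q i. q \<in> P \<Longrightarrow> \<bar>(q *v v) $ i\<bar> \<le> K" using Kbound[of v] by blast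
  have d: "dist (Sig x v) (Sig y v) \<le> (real CARD('n) * K) * dist x y" if "x \<in> {0..}" "y \<in> {0..}" for x y
  proof -
    have dd: "dinf (Sig x v) (Sig y v) (\<bar>x - y\<bar> * K)"
    proof (cases "y \<le> x")
      case True then show ?thesis using Sig_lip[OF K, of y x] that by simp
    next
      case False
      then have "dinf (Sig y v) (Sig x v) ((y - x) * K)" using Sig_lip[OF K, of x y] that by simp
      then show ?thesis using False unfolding dinf_def by (simp add: abs_minus_commute)
    qed
    have "dist (Sig x v) (Sig y v) = norm (Sig x v - Sig y v)" by (simp add: dist_norm)
    also have "\<dots> \<le> (\<Sum>i\<in>UNIV. \<bar>(Sig x v - Sig y v) $ i\<bar>)" by (rule norm_le_l1_cart)
    also have "\<dots> \<le> (\<Sum>i\<in>(UNIV::'n set). \<bar>x - y\<bar> * K)"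
      by (rule sum_mono) (use dd in \<open>simp add: dinf_def\<close>)
    also have "\<dots> = (real CARD('n) * K) * dist x y" by (simp add: dist_real_def)
    finally show ?thesis .
  qed
  have "(real CARD('n) * K)-lipschitz_on {0..} (\<lambda>s. Sig s v)"
    by (rule lipschitz_onI) (use d K in auto)
  then show ?thesis by (rule lipschitz_on_continuous_on)
qed

lemma Sig_dir:
  assumes s: "0 \<le> s" and e: "0 < e"
  shows "\<exists>\<pi>\<in>partitions s. \<forall>j. Sig s v $ j \<le> C E0 \<pi> v $ j + e"
proof -
  have "\<exists>\<pi>\<in>partitions s. Sig s v $ j - e < C E0 \<pi> v $ j" for j
  proof -
    have "Sig s v $ j - e < (SUP \<pi>\<in>partitions s. C E0 \<pi> v $ j)"
      using e unfolding Sig_eq vsup_nth by simp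
    then show ?thesis using less_cSUP_iff[OF part_ne[OF s] Sig_bdd] by blast
  qed
  then obtain g where g: "\<And>j. g j \<in> partitions s" "\<And>j. Sig s v $ j - e < C E0 (g j) v $ j" by metis
  define \<pi> where "\<pi> = (\<Union>j. g j)"
  have fin: "finite \<pi>" unfolding \<pi>_def using part_D(1)[OF g(1)] by auto
  have p: "\<pi> \<in> partitions s"
  proof (rule part_I[OF fin])
    show "0 \<in> \<pi>" "s \<in> \<pi>" unfolding \<pi>_def using part_D(2,3)[OF g(1)] by auto
    show "x \<in> \<pi> \<Longrightarrow> 0 \<le> x \<and> x \<le> s" for x unfolding \<pi>_def using part_D(4)[OF g(1)] by auto
  qed
  have "C E0 (g j) v \<le> C E0 \<pi> v" for j
  proof -
    have "C E0 (g j) v \<le> C E0 (g j \<union> (\<pi> - g j)) v"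
    proof (rule C_refine_fin[of E0, OF _ _ _ _ part_D(2)[OF g(1)] part_D(3)[OF g(1)]])
      show "finite (\<pi> - g j)" using fin by auto
      show "finite (g j)" using part_D(1)[OF g(1)] .
      show "\<forall>r\<in>\<pi> - g j. 0 \<le> r \<and> r \<le> s" using part_D(4)[OF p] by auto
    qed (use E0_pos E0_subp in auto)
    moreover have "g j \<union> (\<pi> - g j) = \<pi>" unfolding \<pi>_def by auto
    ultimately show ?thesis by simp
  qed
  then have "Sig s v $ j \<le> C E0 \<pi> v $ j + e" for j using g(2)[of j] unfolding less_eq_vec_def
    by (smt (verit))
  then show ?thesis using p by blast
qed

lemma Key:
  assumes q: "q \<in> P" and h: "0 \<le> h" and s: "0 \<le> s"
  shows "mexp h q *v Sig s v \<le> Sig (h + s) v"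
proof (cases "h = 0")
  case True then show ?thesis by simp
next
  case False
  then have hp: "0 < h" using h by simp
  have qq: "is_Qmatrix q" using Qm q by auto
  show ?thesis unfolding less_eq_vec_def
  proof
    fix i
    show "(mexp h q *v Sig s v) $ i \<le> Sig (h + s) v $ i"
    proof (rule field_le_epsilon)
      fix e :: real assume e: "0 < e"
      obtain \<pi> where p: "\<pi> \<in> partitions s" and le: "\<forall>j. Sig s v $ j \<le> C E0 \<pi> v $ j + e"
        using Sig_dir[OF s e] by blast
      note pd = part_D[OF p]
      have l1: "Sig s v \<le> C E0 \<pi> v + (\<chi> j. e)" using le by (simp add: less_eq_vec_def)
      have "mexp h q *v Sig s v \<le> mexp h q *v (C E0 \<pi> v + (\<chi> j. e))" by (rule Mmono[OF qq h l1])
      also have "\<dots> = mexp h q *v C E0 \<pi> v + (\<chi> j. e)" by (rule M_addc[OF qq h])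
      also have "\<dots> \<le> E0 h (C E0 \<pi> v) + (\<chi> j. e)" using E0_upper[OF q h] by (simp add: add_right_mono)
      finally have l2: "mexp h q *v Sig s v \<le> E0 h (C E0 \<pi> v) + (\<chi> j. e)" .
      define A where "A = (+) h ` \<pi>"
      define \<rho> where "\<rho> = insert 0 A"
      have fA: "finite A" unfolding A_def using pd(1) by simp
      have fr: "finite \<rho>" unfolding \<rho>_def using fA by simp
      have img: "\<And>x. x \<in> A \<Longrightarrow> h \<le> x \<and> x \<le> h + s" unfolding A_def using pd(4) by auto
      have nn: "\<And>x. x \<in> \<rho> \<Longrightarrow> 0 \<le> x" unfolding \<rho>_def using img hp by fastforce
      have m0: "Min \<rho> = 0" by (rule Min_eqI[OF fr nn]) (simp_all add: \<rho>_def)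
      have r0: "\<rho> - {0} = A" unfolding \<rho>_def using img hp by fastforce
      have hA: "h \<in> A" unfolding A_def using pd(2) by force
      have mh: "Min A = h" using fA hA img by (intro Min_eqI) auto
      have "C E0 \<rho> v = E0 (Min (\<rho> - {0}) - 0) (C E0 (\<rho> - {0}) v)"
        by (rule C_rec[OF fr m0[symmetric]]) (use r0 hA in auto)
      then have cr: "C E0 \<rho> v = E0 h (C E0 \<pi> v)" using r0 mh C_shift[OF pd(1), of E0 h v] unfolding A_def by simp
      have pr: "\<rho> \<in> partitions (h + s)"
      proof (rule part_I[OF fr])
        show "0 \<in> \<rho>" unfolding \<rho>_def by simp
        show "h + s \<in> \<rho>" unfolding \<rho>_def A_def using pd(3) by simp
        show "x \<in> \<rho> \<Longrightarrow> 0 \<le> x \<and> x \<le> h + s" for x using nn[of x] img[of x] h s unfolding \<rho>_def by auto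
      qed
      have "mexp h q *v Sig s v \<le> Sig (h + s) v + (\<chi> j. e)"
        using l2 cr Sig_upper[OF pr, of v] by (metis add_right_mono order_trans)
      then show "(mexp h q *v Sig s v) $ i \<le> Sig (h + s) v $ i + e" by (simp add: less_eq_vec_def)
    qed
  qed
qed

end


lemma int_le_vec:
  fixes f g :: "real \<Rightarrow> real^'n"
  assumes "f integrable_on S" "g integrable_on S" "\<And>x. x \<in> S \<Longrightarrow> f x \<le> g x"
  shows "integral S f \<le> integral S g"
  unfolding less_eq_vec_def
proof
  fix i
  have "integral S (\<lambda>x. f x $ i) \<le> integral S (\<lambda>x. g x $ i)"
  proof (rule integral_le)
    show "(\<lambda>x. f x $ i) integrable_on S"
      using integrable_linear[OF assms(1) bounded_linear_vec_nth[of i]] by (simp add: o_def)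
    show "(\<lambda>x. g x $ i) integrable_on S"
      using integrable_linear[OF assms(2) bounded_linear_vec_nth[of i]] by (simp add: o_def)
    show "\<And>x. x \<in> S \<Longrightarrow> f x $ i \<le> g x $ i" using assms(3) by (simp add: less_eq_vec_def)
  qed
  then show "integral S f $ i \<le> integral S g $ i" using assms(1,2) by simp
qed

locale fsetup = nsetup P for P :: "(real^'n^'n) set" +
  fixes f :: "real^'n^'n \<Rightarrow> real^'n"
  assumes Qfin: "\<forall>u i. bdd_above ((\<lambda>q. (q *v u + f q) $ i) ` P)"
begin

definition g :: "real^'n \<Rightarrow> real^'n" where "g u0 = Qop P f u0"

definition I :: "real^'n \<Rightarrow> real \<Rightarrow> real^'n" where
  "I u0 r = integral {0..r} (\<lambda>s. Sig s (g u0))"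

lemma Sig_int: "(\<lambda>s. Sig s w) integrable_on {a..b}" if "0 \<le> a" for a b
  by (rule integrable_continuous_interval) (rule continuous_on_subset[OF Sig_cont], use that in auto)

lemma Sig_int_shift: "0 \<le> h \<Longrightarrow> (\<lambda>s. Sig (h + s) w) integrable_on {0..r}"
  by (rule integrable_continuous_interval)
     (rule continuous_on_compose2[OF Sig_cont], auto intro!: continuous_intros)

lemma I_add:
  assumes "0 \<le> h" "0 \<le> r"
  shows "I u0 (h + r) = I u0 h + integral {0..r} (\<lambda>s. Sig (h + s) (g u0))"
proof -
  have "integral {0..h} (\<lambda>s. Sig s (g u0)) + integral {h..h + r} (\<lambda>s. Sig s (g u0))
        = integral {0..h + r} (\<lambda>s. Sig s (g u0))"
    by (rule Henstock_Kurzweil_Integration.integral_combine) (use assms Sig_int in auto)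
  moreover have "integral {h..h + r} (\<lambda>s. Sig s (g u0)) = integral {0..r} (\<lambda>s. Sig (h + s) (g u0))"
    using integral_shift_Icc_real[of 0 r "\<lambda>s. Sig s (g u0)" h] by (simp add: o_def add.commute)
  ultimately show ?thesis unfolding I_def by simp
qed

lemma I_0: "I u0 0 = 0"
  unfolding I_def by simp

lemma Qop_upper: "q \<in> P \<Longrightarrow> q *v u + f q \<le> Qop P f u"
  unfolding Qop_def by (rule vsup_upper) (use Qfin in auto)

lemma M_int: "(\<lambda>s. mexp s q *v x) integrable_on {a..b}"
  by (rule integrable_continuous_interval) (rule Mcont)

lemma base:
  assumes q: "q \<in> P" and h: "0 \<le> h"
  shows "Sq f q h u0 - u0 \<le> I u0 h"
proof -
  have qq: "is_Qmatrix q" using Qm q by auto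
  have "mexp h q *v u0 - u0 = integral {0..h} (\<lambda>s. mexp s q *v (q *v u0))"
    using MFTC[OF h, of q u0] by (simp add: integral_unique)
  then have "Sq f q h u0 - u0 = integral {0..h} (\<lambda>s. mexp s q *v (q *v u0)) + integral {0..h} (\<lambda>s. mexp s q *v f q)"
    unfolding Sq_def by (simp add: algebra_simps)
  also have "\<dots> = integral {0..h} (\<lambda>s. mexp s q *v (q *v u0 + f q))"
    by (simp add: integral_add[OF M_int M_int, symmetric] matrix_vector_right_distrib)
  also have "\<dots> \<le> integral {0..h} (\<lambda>s. Sig s (g u0))"
  proof (rule int_le_vec[OF M_int Sig_int])
    fix s assume s: "s \<in> {0..h}"
    then have s0: "0 \<le> s" by simp
    have "mexp s q *v (q *v u0 + f q) \<le> mexp s q *v g u0"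
      using Mmono[OF qq s0 Qop_upper[OF q]] unfolding g_def .
    also have "\<dots> \<le> E0 s (g u0)" by (rule E0_upper[OF q s0])
    also have "\<dots> \<le> Sig s (g u0)" by (rule E0_le_Sig[OF s0])
    finally show "mexp s q *v (q *v u0 + f q) \<le> Sig s (g u0)" .
  qed simp
  finally show ?thesis unfolding I_def .
qed

lemma step:
  assumes q: "q \<in> P" and h: "0 \<le> h" and r: "0 \<le> r" and w: "w - u0 \<le> I u0 r"
  shows "Sq f q h w - u0 \<le> I u0 (h + r)"
proof -
  have qq: "is_Qmatrix q" using Qm q by auto
  have e: "Sq f q h w - u0 = mexp h q *v (w - u0) + (Sq f q h u0 - u0)"
    unfolding Sq_def by (simp add: matrix_vector_mult_diff_distrib algebra_simps)
  have "mexp h q *v (w - u0) \<le> mexp h q *v I u0 r" by (rule Mmono[OF qq h w])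
  also have "\<dots> = integral {0..r} (\<lambda>s. mexp h q *v Sig s (g u0))"
    unfolding I_def using integral_linear[OF Sig_int[where a=0 and b=r and w="g u0"] matrix_vector_mul_bounded_linear[of "mexp h q"]]
    by (simp add: o_def)
  also have "\<dots> \<le> integral {0..r} (\<lambda>s. Sig (h + s) (g u0))"
  proof (rule int_le_vec)
    show "(\<lambda>s. mexp h q *v Sig s (g u0)) integrable_on {0..r}"
      using integrable_linear[OF Sig_int[where a=0 and b=r and w="g u0"] matrix_vector_mul_bounded_linear[of "mexp h q"]]
      by (simp add: o_def)
    show "(\<lambda>s. Sig (h + s) (g u0)) integrable_on {0..r}" by (rule Sig_int_shift[OF h])
    show "\<And>s. s \<in> {0..r} \<Longrightarrow> mexp h q *v Sig s (g u0) \<le> Sig (h + s) (g u0)"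
      using Key[OF q h] by auto
  qed
  finally have a: "mexp h q *v (w - u0) \<le> integral {0..r} (\<lambda>s. Sig (h + s) (g u0))" .
  have b: "Sq f q h u0 - u0 \<le> I u0 h" by (rule base[OF q h])
  show ?thesis unfolding e I_add[OF h r] using add_mono[OF b a] by (simp add: add.commute)
qed

lemma chain:
  shows "finite \<pi> \<Longrightarrow> \<pi> \<noteq> {} \<Longrightarrow> C (Eh P f) \<pi> u0 - u0 \<le> I u0 (Max \<pi> - Min \<pi>)"
proof (induction "card \<pi>" arbitrary: \<pi> rule: less_induct)
  case (less \<pi>)
  show ?case
  proof (cases "\<pi> - {Min \<pi>} = {}")
    case True
    then have "\<pi> = {Min \<pi>}" using less.prems by auto
    then have "Max \<pi> = Min \<pi>" by (metis Max_singleton)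
    moreover have "C (Eh P f) \<pi> u0 = u0" using C_triv[OF less.prems(1) True] .
    ultimately show ?thesis by (simp add: I_0)
  next
    case False
    then obtain a b where ab: "a = Min \<pi>" "b = Min (\<pi> - {a})" "a \<in> \<pi>" "b \<in> \<pi> - {a}" "a < b"
      "\<forall>x\<in>\<pi>. a \<le> x" "\<forall>x\<in>\<pi> - {a}. b \<le> x"
      "\<And>u. C (Eh P f) \<pi> u = Eh P f (b - a) (C (Eh P f) (\<pi> - {a}) u)"
      using C_step[OF less.prems(1) False] by blast
    have card: "card (\<pi> - {a}) < card \<pi>" using less.prems ab by (meson card_Diff1_less)
    have f1: "finite (\<pi> - {a})" "\<pi> - {a} \<noteq> {}" using less.prems(1) ab(4) by auto
    have mx: "Max (\<pi> - {a}) = Max \<pi>"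
    proof (rule Max_eqI)
      show "finite (\<pi> - {a})" using less.prems by auto
      show "y \<le> Max \<pi>" if "y \<in> \<pi> - {a}" for y using that less.prems by auto
      have "Max \<pi> \<in> \<pi>" using less.prems by auto
      moreover have "Max \<pi> \<noteq> a" using ab less.prems by (metis DiffE Max_ge leD)
      ultimately show "Max \<pi> \<in> \<pi> - {a}" by auto
    qed
    have IH: "C (Eh P f) (\<pi> - {a}) u0 - u0 \<le> I u0 (Max \<pi> - b)"
      using less.hyps[OF card f1] mx ab(2) by simp
    have r: "0 \<le> Max \<pi> - b" using ab(4) less.prems(1) by auto
    have qs: "Sq f q (b - a) (C (Eh P f) (\<pi> - {a}) u0) \<le> u0 + I u0 ((b - a) + (Max \<pi> - b))"
      if q: "q \<in> P" for q
    proof -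
      have "Sq f q (b - a) (C (Eh P f) (\<pi> - {a}) u0) - u0 \<le> I u0 ((b - a) + (Max \<pi> - b))"
        by (rule step[OF q _ r IH]) (use ab in auto)
      then show ?thesis by (simp add: algebra_simps)
    qed
    have "Eh P f (b - a) (C (Eh P f) (\<pi> - {a}) u0) \<le> u0 + I u0 ((b - a) + (Max \<pi> - b))"
      unfolding Eh_def[of P f "b - a" "C (Eh P f) (\<pi> - {a}) u0"] by (rule vsup_least[OF Pne]) (rule qs)
    then show ?thesis unfolding ab(8) using ab(1) by (simp add: algebra_simps)
  qed
qed

lemma final: "0 \<le> t \<Longrightarrow> nisio P f t u0 - u0 \<le> I u0 t"
proof -
  assume t: "0 \<le> t"
  have "nisio P f t u0 \<le> u0 + I u0 t"
    unfolding nisio_def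
  proof (rule vsup_least[OF part_ne[OF t]])
    fix \<pi> assume p: "\<pi> \<in> partitions t"
    have "C (Eh P f) \<pi> u0 - u0 \<le> I u0 t" using chain[OF part_D(1,7)[OF p]] part_D(5,6)[OF p] by simp
    then show "Epi P f \<pi> u0 \<le> u0 + I u0 t" using Epi_C[OF p] by (simp add: algebra_simps)
  qed
  then show ?thesis by (simp add: algebra_simps)
qed

end


theorem mainTheorem10:
  fixes P :: "(real^'n^'n) set" and f :: "real^'n^'n \<Rightarrow> real^'n" and q0 :: "real^'n^'n"
  assumes Qm: "\<forall>q\<in>P. is_Qmatrix q"
    and q0: "q0 \<in> P" "f q0 = 0"
    and fle: "\<forall>q\<in>P. f q \<le> 0"
    and Qfin: "\<forall>u i. bdd_above ((\<lambda>q. (q *v u + f q) $ i) ` P)"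
    and fbdd: "\<exists>C. \<forall>q\<in>P. \<forall>i. \<bar>f q $ i\<bar> \<le> C"
  shows "(\<forall>v. continuous_on {0..} (\<lambda>s. nisio P (\<lambda>_. 0) s v))
    \<and> (\<forall>u0 t. t \<ge> 0 \<longrightarrow>
          nisio P f t u0 - u0 \<le> integral {0..t} (\<lambda>s. nisio P (\<lambda>_. 0) s (Qop P f u0)))"
proof -
  obtain Cf where Cf: "\<And>q i. q \<in> P \<Longrightarrow> \<bar>f q $ i\<bar> \<le> Cf" using fbdd by blast
  have qbdd: "\<forall>v. \<exists>K. \<forall>q\<in>P. \<forall>i. \<bar>(q *v v) $ i\<bar> \<le> K"
  proof
    fix v :: "real^'n"
    have "\<exists>B. \<forall>q\<in>P. \<bar>(q *v v) $ i\<bar> \<le> B" for i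
    proof -
      obtain B1 where B1: "\<And>q. q \<in> P \<Longrightarrow> (q *v v + f q) $ i \<le> B1"
        using Qfin[rule_format, of v i] unfolding bdd_above_def by blast
      obtain B2 where B2: "\<And>q. q \<in> P \<Longrightarrow> (q *v (- v) + f q) $ i \<le> B2"
        using Qfin[rule_format, of "- v" i] unfolding bdd_above_def by blast
      have "\<bar>(q *v v) $ i\<bar> \<le> max B1 B2 + Cf" if q: "q \<in> P" for q
      proof -
        have neg: "(q *v (- v)) $ i = - (q *v v) $ i"
          by (simp add: matrix_vector_mult_def sum_negf)
        have "(q *v v) $ i + f q $ i \<le> B1" using B1[OF q] by simp
        moreover have "- (q *v v) $ i + f q $ i \<le> B2" using B2[OF q] neg by simp
        moreover have "\<bar>f q $ i\<bar> \<le> Cf" by (rule Cf[OF q])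
        ultimately show ?thesis by (simp add: abs_le_iff) linarith
      qed
      then show ?thesis by blast
    qed
    then obtain B where B: "\<And>i q. q \<in> P \<Longrightarrow> \<bar>(q *v v) $ i\<bar> \<le> B i" by metis
    have "\<forall>q\<in>P. \<forall>i. \<bar>(q *v v) $ i\<bar> \<le> (\<Sum>j\<in>UNIV. \<bar>B j\<bar>)"
    proof (intro ballI allI)
      fix q i assume q: "q \<in> P"
      have "B i \<le> (\<Sum>j\<in>UNIV. \<bar>B j\<bar>)"
        using member_le_sum[of i UNIV "\<lambda>j. \<bar>B j\<bar>"] by (metis UNIV_I abs_ge_self abs_ge_zero finite order_trans)
      then show "\<bar>(q *v v) $ i\<bar> \<le> (\<Sum>j\<in>UNIV. \<bar>B j\<bar>)" using B[OF q, of i] by linarith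
    qed
    then show "\<exists>K. \<forall>q\<in>P. \<forall>i. \<bar>(q *v v) $ i\<bar> \<le> K" by blast
  qed
  interpret fsetup P f
    by unfold_locales (use Qm q0 qbdd Qfin in auto)
  show ?thesis
  proof (intro conjI allI impI)
    fix v show "continuous_on {0..} (\<lambda>s. nisio P (\<lambda>_. 0) s v)"
      using Sig_cont[of v] unfolding Sig_def .
  next
    fix u0 :: "real^'n" and t :: real assume t: "0 \<le> t"
    show "nisio P f t u0 - u0 \<le> integral {0..t} (\<lambda>s. nisio P (\<lambda>_. 0) s (Qop P f u0))"
      using final[OF t, of u0] unfolding I_def g_def Sig_def .
  qed
qed

end
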